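(* Let $n\ge 1$. As polynomials in the indeterminates $x$ and $y$ with coefficients in $\mathbb{Q}[\mathfrak{S}_n]$, \[\rho(x)\rho(y)=\rho(xy),\qquad \overline{\rho}(x)\overline{\rho}(y)=\overline{\rho}(xy),\qquad \overline{\rho}(x)\rho(y)=\overline{\rho}(xy),\qquad \rho(x)\overline{\rho}(y)=\rho(xy),\] where $\rho(x)=\sum_{\pi\in\mathfrak{S}_n}\Omega'(\pi;x/2)\,\pi$ and $\overline{\rho}(x)=\sum_{\pi\in\mathfrak{S}_n}\overline{\Omega}'(\pi;x/2)\,\pi$.
   Context: $\mathfrak{S}_n$ is the symmetric group on $[n]=\{1,\dots,n\}$, permutations are written as words $(\pi(1),\dots,\pi(n))$, and multiplication in the group algebra $\mathbb{Q}[\mathfrak{S}_n]$ is composition: $(\sigma\tau)(i)=\sigma(\tau(i))$. Let $Z$ be a finite totally ordered set each of whose elements is declared either "plus-type" or "minus-type". For $\pi\in\mathfrak{S}_n$ let $N(\pi;Z)$ be the number of sequences $(a_1,\dots,a_n)\in Z^n$ with $a_1\le a_2\le\dots\le a_n$ such that for every $s\in[n-1]$: if $\pi(s)<\pi(s+1)$ then $a_s<a_{s+1}$ or ($a_s=a_{s+1}$ and $a_s$ is plus-type); if $\pi(s)>\pi(s+1)$ then $a_s<a_{s+1}$ or ($a_s=a_{s+1}$ and $a_s$ is minus-type). For a positive integer $k$ define the enriched order polynomial $\Omega'(\pi;k)=N(\pi;Z)$ with $Z=\{\bar1<1<\bar2<2<\dots<\bar k<k\}$, and the exterior enriched order polynomial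 $\overline{\Omega}'(\pi;k)=N(\pi;Z)$ with $Z=\{0<\bar1<1<\bar2<2<\dots<\overline{k-1}<k-1<\bar k\}$; here the elements $0$ and $j$ are plus-type and the barred elements $\bar j$ are minus-type. Each of these is, as a function of the positive integer $k$, the restriction of a unique polynomial in $k$ with rational coefficients, denoted by the same symbol; this polynomial is evaluated at $x/2$ above. *)

theory Defs
  imports "HOL-Combinatorics.Permutations" "HOL-Computational_Algebra.Polynomial" "HOL-Library.FuncSet"
begin

text \<open>A totally ordered set Z with m elements is modelled by the indices 0 < 1 < ... < m-1,
  and typ j = True means that the j-th element is plus-type.\<close>

definition enriched_count :: "nat \<Rightarrow> (nat \<Rightarrow> nat) \<Rightarrow> nat \<Rightarrow> (nat \<Rightarrow> bool) \<Rightarrow> nat" where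
  "enriched_count n \<pi> m typ = card {a \<in> {1..n} \<rightarrow>\<^sub>E {..<m}.
      (\<forall>s\<in>{1..<n}. a s \<le> a (Suc s)) \<and>
      (\<forall>s\<in>{1..<n}. \<pi> s < \<pi> (Suc s) \<longrightarrow> (a s < a (Suc s) \<or> (a s = a (Suc s) \<and> typ (a s)))) \<and>
      (\<forall>s\<in>{1..<n}. \<pi> s > \<pi> (Suc s) \<longrightarrow> (a s < a (Suc s) \<or> (a s = a (Suc s) \<and> \<not> typ (a s))))}"

text \<open>Z = {1bar < 1 < ... < kbar < k}: index 2i-2 is ibar (minus), 2i-1 is i (plus).\<close>
definition enriched_order :: "nat \<Rightarrow> (nat \<Rightarrow> nat) \<Rightarrow> nat \<Rightarrow> nat" where
  "enriched_order n \<pi> k = enriched_count n \<pi> (2 * k) odd"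

text \<open>Z = {0 < 1bar < 1 < ... < (k-1)bar < k-1 < kbar}: index 0 is 0 (plus),
  2i-1 is ibar (minus), 2i is i (plus).\<close>
definition ext_enriched_order :: "nat \<Rightarrow> (nat \<Rightarrow> nat) \<Rightarrow> nat \<Rightarrow> nat" where
  "ext_enriched_order n \<pi> k = enriched_count n \<pi> (2 * k) even"

definition enriched_order_poly :: "nat \<Rightarrow> (nat \<Rightarrow> nat) \<Rightarrow> rat poly" where
  "enriched_order_poly n \<pi> =
     (THE p. \<forall>k::nat. k \<ge> 1 \<longrightarrow> poly p (of_nat k) = of_nat (enriched_order n \<pi> k))"

definition ext_enriched_order_poly :: "nat \<Rightarrow> (nat \<Rightarrow> nat) \<Rightarrow> rat poly" where
  "ext_enriched_order_poly n \<pi> =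
     (THE p. \<forall>k::nat. k \<ge> 1 \<longrightarrow> poly p (of_nat k) = of_nat (ext_enriched_order n \<pi> k))"

text \<open>Elements of Q[S_n] as coefficient functions, zero off S_n.\<close>
definition ga_mult :: "nat \<Rightarrow> ((nat \<Rightarrow> nat) \<Rightarrow> rat) \<Rightarrow> ((nat \<Rightarrow> nat) \<Rightarrow> rat) \<Rightarrow> (nat \<Rightarrow> nat) \<Rightarrow> rat" where
  "ga_mult n f g = (\<lambda>\<sigma>. \<Sum>\<alpha>\<in>{p. p permutes {1..n}}. \<Sum>\<beta>\<in>{p. p permutes {1..n}}.
       if \<alpha> \<circ> \<beta> = \<sigma> then f \<alpha> * g \<beta> else 0)"

definition rho :: "nat \<Rightarrow> rat \<Rightarrow> (nat \<Rightarrow> nat) \<Rightarrow> rat" where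
  "rho n x = (\<lambda>\<pi>. if \<pi> permutes {1..n} then poly (enriched_order_poly n \<pi>) (x / 2) else 0)"

definition rho_bar :: "nat \<Rightarrow> rat \<Rightarrow> (nat \<Rightarrow> nat) \<Rightarrow> rat" where
  "rho_bar n x = (\<lambda>\<pi>. if \<pi> permutes {1..n} then poly (ext_enriched_order_poly n \<pi>) (x / 2) else 0)"

end

theory Submission
  imports Defs "HOL-Library.Product_Lexorder"
begin

definition prec :: "(nat \<Rightarrow> bool) \<Rightarrow> (nat \<Rightarrow> nat) \<Rightarrow> nat \<Rightarrow> nat \<Rightarrow> bool" where
  "prec typ w i j \<longleftrightarrow> w i < w j \<or> (w i = w j \<and> (if typ (w i) then i < j else j < i))"

definition sorts :: "nat \<Rightarrow> (nat \<Rightarrow> bool) \<Rightarrow> (nat \<Rightarrow> nat) \<Rightarrow> (nat \<Rightarrow> nat) \<Rightarrow> bool" where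
  "sorts n typ w \<pi> \<longleftrightarrow> (\<forall>s\<in>{1..<n}. prec typ w (\<pi> s) (\<pi> (Suc s)))"

lemma prec_trans: "prec typ w i j \<Longrightarrow> prec typ w j k \<Longrightarrow> prec typ w i k"
  by (auto simp: prec_def split: if_splits)
lemma prec_irrefl: "\<not> prec typ w i i"
  by (auto simp: prec_def)
lemma prec_total: "i \<noteq> j \<Longrightarrow> prec typ w i j \<or> prec typ w j i"
  by (auto simp: prec_def)

lemma mono_chain:
  assumes ch: "\<forall>s\<in>{1..<n}. r (f s) (f (Suc s))"
    and tr: "\<And>a b c. r a b \<Longrightarrow> r b c \<Longrightarrow> r a c"
  shows "1 \<le> s \<Longrightarrow> s < t \<Longrightarrow> t \<le> n \<Longrightarrow> r (f s) (f t)"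
proof (induction t)
  case 0 then show ?case by simp
next
  case (Suc t)
  show ?case
  proof (cases "s = t")
    case True then show ?thesis using ch Suc.prems by auto
  next
    case False
    then have "r (f s) (f t)" using Suc by auto
    moreover have "r (f t) (f (Suc t))" using ch Suc.prems False by auto
    ultimately show ?thesis using tr by blast
  qed
qed

lemma chain_inj:
  assumes ch: "\<forall>s\<in>{1..<n}. r (f s) (f (Suc s))"
    and tr: "\<And>a b c. r a b \<Longrightarrow> r b c \<Longrightarrow> r a c"
    and irr: "\<And>a. \<not> r a a"
  shows "inj_on f {1..n}"
proof (rule inj_onI)
  fix a b assume ab: "a \<in> {1..n}" "b \<in> {1..n}" "f a = f b"
  show "a = b"
  proof (rule ccontr)
    assume "a \<noteq> b"
    then have "a < b \<or> b < a" by auto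
    then show False
      using mono_chain[where n=n and r=r and f=f, OF ch tr, where s=a and t=b] mono_chain[where n=n and r=r and f=f, OF ch tr, where s=b and t=a] ab irr by auto
  qed
qed

lemma rank_lemma:
  assumes ch: "\<forall>s\<in>{1..<n}. r (f s) (f (Suc s))"
    and tr: "\<And>a b c. r a b \<Longrightarrow> r b c \<Longrightarrow> r a c"
    and irr: "\<And>a. \<not> r a a"
    and s: "s \<in> {1..n}"
  shows "card {y \<in> f ` {1..n}. r y (f s)} = s - 1"
proof -
  have "{y \<in> f ` {1..n}. r y (f s)} = f ` {1..<s}"
  proof safe
    fix t assume t: "t \<in> {1..n}" "r (f t) (f s)"
    have "t < s"
    proof (rule ccontr)
      assume "\<not> t < s"
      then have "t = s \<or> s < t" by auto
      then show False
      proof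
        assume "t = s" then show False using t irr by auto
      next
        assume "s < t"
        then have "r (f s) (f t)" using mono_chain[where n=n and r=r and f=f, OF ch tr, where s=s and t=t] s t by auto
        then show False using t(2) tr irr by blast
      qed
    qed
    then show "f t \<in> f ` {1..<s}" using t by auto
  next
    fix t assume "t \<in> {1..<s}"
    then show "f t \<in> f ` {1..n}" using s by auto
  next
    fix t assume "t \<in> {1..<s}"
    then show "r (f t) (f s)" using mono_chain[where n=n and r=r and f=f, OF ch tr, where s=t and t=s] s by auto
  qed
  moreover have "inj_on f {1..<s}"
  proof -
    have "inj_on f {1..n}"
      by (rule chain_inj[where n=n and r=r and f=f]) (fact ch, erule (1) tr, rule irr)
    then show ?thesis by (rule inj_on_subset) (use s in auto)
  qed
  ultimately show ?thesis by (simp add: card_image)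
qed

lemma chain_unique:
  assumes chf: "\<forall>s\<in>{1..<n}. r (f s) (f (Suc s))"
    and chg: "\<forall>s\<in>{1..<n}. r (g s) (g (Suc s))"
    and tr: "\<And>a b c. r a b \<Longrightarrow> r b c \<Longrightarrow> r a c"
    and irr: "\<And>a. \<not> r a a"
    and img: "f ` {1..n} = g ` {1..n}"
    and s: "s \<in> {1..n}"
  shows "f s = g s"
proof -
  obtain t where t: "t \<in> {1..n}" "f s = g t" using img s by blast
  have "s - 1 = t - 1"
    using rank_lemma[where n=n and r=r and f=f, OF chf tr irr s] rank_lemma[where n=n and r=r and f=g, OF chg tr irr t(1)] img t(2) by simp
  then have "s = t" using s t by auto
  then show ?thesis using t by simp
qed

lemma sorts_unique:
  assumes "\<pi> permutes {1..n}" "\<pi>' permutes {1..n}" "sorts n typ w \<pi>" "sorts n typ w \<pi>'"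
  shows "\<pi> = \<pi>'"
proof
  fix s
  show "\<pi> s = \<pi>' s"
  proof (cases "s \<in> {1..n}")
    case True
    show ?thesis
      by (rule chain_unique[of n "prec typ w"])
         (use assms True prec_trans prec_irrefl in \<open>auto simp: sorts_def permutes_image\<close>)
  next
    case False
    then show ?thesis using assms by (simp add: permutes_def)
  qed
qed

definition skey :: "(nat \<Rightarrow> bool) \<Rightarrow> (nat \<Rightarrow> nat) \<Rightarrow> nat \<Rightarrow> nat \<times> int" where
  "skey typ w i = (w i, if typ (w i) then int i else - int i)"

lemma prec_skey: "prec typ w i j \<longleftrightarrow> skey typ w i < skey typ w j"
  by (auto simp: prec_def skey_def less_prod_def)

lemma skey_inj: "inj (skey typ w)"
  by (rule injI) (auto simp: skey_def split: if_splits)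

lemma sorts_exists: "\<exists>\<pi>. \<pi> permutes {1..n} \<and> sorts n typ w \<pi>"
proof -
  define xs where "xs = sort_key (skey typ w) [1..<Suc n]"
  have len: "length xs = n" and st: "set xs = {1..n}" and ds: "distinct xs"
    by (auto simp: xs_def)
  have "sorted (map (skey typ w) xs)" by (simp add: xs_def)
  moreover have "distinct (map (skey typ w) xs)"
    using ds skey_inj by (simp add: distinct_map inj_on_def inj_def)
  ultimately have sw: "sorted_wrt (<) (map (skey typ w) xs)" by (simp add: strict_sorted_iff)
  define \<pi> where "\<pi> = (\<lambda>s. if s \<in> {1..n} then xs ! (s - 1) else s)"
  have inj: "inj_on \<pi> {1..n}"
  proof (rule inj_onI)
    fix a b assume "a \<in> {1..n}" "b \<in> {1..n}" "\<pi> a = \<pi> b"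
    then have "xs ! (a - 1) = xs ! (b - 1)" "a - 1 < n" "b - 1 < n" by (auto simp: \<pi>_def)
    then have "a - 1 = b - 1" using ds len nth_eq_iff_index_eq by metis
    then show "a = b" using \<open>a \<in> {1..n}\<close> \<open>b \<in> {1..n}\<close> by auto
  qed
  have sub: "\<pi> ` {1..n} \<subseteq> {1..n}"
  proof
    fix y assume "y \<in> \<pi> ` {1..n}"
    then obtain a where "a \<in> {1..n}" "y = xs ! (a - 1)" by (auto simp: \<pi>_def)
    then show "y \<in> {1..n}" using st len nth_mem[of "a - 1" xs] by auto
  qed
  have "\<pi> ` {1..n} = {1..n}" using endo_inj_surj[OF _ sub inj] by simp
  then have "bij_betw \<pi> {1..n} {1..n}" using inj by (simp add: bij_betw_def)
  then have perm: "\<pi> permutes {1..n}"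
    by (rule bij_imp_permutes) (auto simp: \<pi>_def)
  have "sorts n typ w \<pi>"
    unfolding sorts_def prec_skey
  proof
    fix s assume s: "s \<in> {1..<n}"
    have "(map (skey typ w) xs) ! (s - 1) < (map (skey typ w) xs) ! s"
      using sorted_wrt_nth_less[OF sw, of "s - 1" s] s len by auto
    then show "skey typ w (\<pi> s) < skey typ w (\<pi> (Suc s))"
      using s len by (auto simp: \<pi>_def)
  qed
  then show ?thesis using perm by blast
qed



lemma prec_iff:
  "p \<noteq> q \<Longrightarrow> prec typ w p q \<longleftrightarrow> (w p \<le> w q \<and>
     (p < q \<longrightarrow> (w p < w q \<or> (w p = w q \<and> typ (w p)))) \<and>
     (p > q \<longrightarrow> (w p < w q \<or> (w p = w q \<and> \<not> typ (w p)))))"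
  by (auto simp: prec_def)

lemma EC_words:
  assumes p: "\<pi> permutes {1..n}"
  shows "enriched_count n \<pi> m typ = card {w \<in> {1..n} \<rightarrow>\<^sub>E {..<m}. sorts n typ w \<pi>}"
proof -
  let ?A = "{w \<in> {1..n} \<rightarrow>\<^sub>E {..<m}. sorts n typ w \<pi>}"
  let ?B = "{a \<in> {1..n} \<rightarrow>\<^sub>E {..<m}.
      (\<forall>s\<in>{1..<n}. a s \<le> a (Suc s)) \<and>
      (\<forall>s\<in>{1..<n}. \<pi> s < \<pi> (Suc s) \<longrightarrow> (a s < a (Suc s) \<or> (a s = a (Suc s) \<and> typ (a s)))) \<and>
      (\<forall>s\<in>{1..<n}. \<pi> s > \<pi> (Suc s) \<longrightarrow> (a s < a (Suc s) \<or> (a s = a (Suc s) \<and> \<not> typ (a s))))}"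
  have img: "\<And>x. \<pi> x \<in> {1..n} \<longleftrightarrow> x \<in> {1..n}" using p by (rule permutes_in_image)
  have img2: "\<And>x. inv \<pi> x \<in> {1..n} \<longleftrightarrow> x \<in> {1..n}" using permutes_inv[OF p] by (rule permutes_in_image)
  have neq: "\<And>s. \<pi> s \<noteq> \<pi> (Suc s)" using permutes_inj[OF p] by (metis injD n_not_Suc_n)
  have inv1: "\<And>x. \<pi> (inv \<pi> x) = x" and inv2: "\<And>x. inv \<pi> (\<pi> x) = x"
    using permutes_inverses[OF p] by auto
  have "bij_betw (\<lambda>w. restrict (w \<circ> \<pi>) {1..n}) ?A ?B"
  proof (rule bij_betwI[where g = "\<lambda>a. restrict (a \<circ> inv \<pi>) {1..n}"])
    show "(\<lambda>w. restrict (w \<circ> \<pi>) {1..n}) \<in> ?A \<rightarrow> ?B"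
    proof
      fix w assume w: "w \<in> ?A"
      have "\<forall>s\<in>{1..<n}. prec typ w (\<pi> s) (\<pi> (Suc s))" using w by (simp add: sorts_def)
      then have "\<forall>s\<in>{1..<n}. w (\<pi> s) \<le> w (\<pi> (Suc s)) \<and>
     (\<pi> s < \<pi> (Suc s) \<longrightarrow> (w (\<pi> s) < w (\<pi> (Suc s)) \<or> (w (\<pi> s) = w (\<pi> (Suc s)) \<and> typ (w (\<pi> s))))) \<and>
     (\<pi> s > \<pi> (Suc s) \<longrightarrow> (w (\<pi> s) < w (\<pi> (Suc s)) \<or> (w (\<pi> s) = w (\<pi> (Suc s)) \<and> \<not> typ (w (\<pi> s)))))"
        using prec_iff[OF neq] by blast
      then show "restrict (w \<circ> \<pi>) {1..n} \<in> ?B"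
        using w img by (auto simp: PiE_iff)
    qed
    show "(\<lambda>a. restrict (a \<circ> inv \<pi>) {1..n}) \<in> ?B \<rightarrow> ?A"
    proof
      fix a assume a: "a \<in> ?B"
      have "\<forall>s\<in>{1..<n}. prec typ (restrict (a \<circ> inv \<pi>) {1..n}) (\<pi> s) (\<pi> (Suc s))"
      proof
        fix s assume s: "s \<in> {1..<n}"
        show "prec typ (restrict (a \<circ> inv \<pi>) {1..n}) (\<pi> s) (\<pi> (Suc s))"
        proof -
          have ps: "\<pi> s \<in> {1..n}" "\<pi> (Suc s) \<in> {1..n}" using img s by auto
          then have e: "restrict (a \<circ> inv \<pi>) {1..n} (\<pi> s) = a s"
              "restrict (a \<circ> inv \<pi>) {1..n} (\<pi> (Suc s)) = a (Suc s)" using inv2 by auto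
          show ?thesis unfolding prec_iff[OF neq] e using a s by auto
        qed
      qed
      then show "restrict (a \<circ> inv \<pi>) {1..n} \<in> ?A"
        using a img2 by (auto simp: PiE_iff sorts_def)
    qed
    show "restrict (restrict (w \<circ> \<pi>) {1..n} \<circ> inv \<pi>) {1..n} = w" if "w \<in> ?A" for w
    proof (rule PiE_ext[of _ "{1..n}" "\<lambda>_. {..<m}"])
      show "w \<in> {1..n} \<rightarrow>\<^sub>E {..<m}" using that by auto
      show "restrict (restrict (w \<circ> \<pi>) {1..n} \<circ> inv \<pi>) {1..n} \<in> {1..n} \<rightarrow>\<^sub>E {..<m}"
        using that img img2 inv1 by (auto simp: PiE_iff)
    qed (use img2 inv1 in auto)
    show "restrict (restrict (a \<circ> inv \<pi>) {1..n} \<circ> \<pi>) {1..n} = a" if "a \<in> ?B" for a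
    proof (rule PiE_ext[of _ "{1..n}" "\<lambda>_. {..<m}"])
      show "a \<in> {1..n} \<rightarrow>\<^sub>E {..<m}" using that by auto
      show "restrict (restrict (a \<circ> inv \<pi>) {1..n} \<circ> \<pi>) {1..n} \<in> {1..n} \<rightarrow>\<^sub>E {..<m}"
        using that img img2 inv2 by (auto simp: PiE_iff)
    qed (use img inv2 in auto)
  qed
  then have "card ?A = card ?B" by (rule bij_betw_same_card)
  then show ?thesis unfolding enriched_count_def by simp
qed

definition enc :: "nat \<Rightarrow> (nat \<Rightarrow> bool) \<Rightarrow> nat \<Rightarrow> nat \<Rightarrow> nat" where
  "enc m1 t2 x y = y * m1 + (if t2 y then x else m1 - 1 - x)"

definition dx :: "nat \<Rightarrow> (nat \<Rightarrow> bool) \<Rightarrow> nat \<Rightarrow> nat" where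
  "dx m1 t2 c = (if t2 (c div m1) then c mod m1 else m1 - 1 - c mod m1)"

lemma enc_low: "x < m1 \<Longrightarrow> (if t2 y then x else m1 - 1 - x) < (m1::nat)"
  by auto

lemma enc_div: "x < m1 \<Longrightarrow> enc m1 t2 x y div m1 = y"
  using enc_low[of x m1 t2 y] unfolding enc_def by simp

lemma enc_mod: "x < m1 \<Longrightarrow> enc m1 t2 x y mod m1 = (if t2 y then x else m1 - 1 - x)"
  using enc_low[of x m1 t2 y] unfolding enc_def by simp

lemma enc_lt: "x < m1 \<Longrightarrow> y < m2 \<Longrightarrow> enc m1 t2 x y < m1 * m2"
proof -
  assume x: "x < m1" and y: "y < m2"
  have "enc m1 t2 x y < y * m1 + m1" using enc_low[OF x, of t2 y] unfolding enc_def by simp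
  also have "\<dots> = (y + 1) * m1" by simp
  also have "\<dots> \<le> m2 * m1" using y by (intro mult_right_mono) auto
  finally show ?thesis by (simp add: mult.commute)
qed

lemma enc_less_y: "x < m1 \<Longrightarrow> x' < m1 \<Longrightarrow> y < y' \<Longrightarrow> enc m1 t2 x y < enc m1 t2 x' y'"
proof -
  assume x: "x < m1" and x': "x' < m1" and y: "y < y'"
  have "enc m1 t2 x y < y * m1 + m1" using enc_low[OF x, of t2 y] unfolding enc_def by simp
  also have "\<dots> = (y + 1) * m1" by simp
  also have "\<dots> \<le> y' * m1" using y by (intro mult_right_mono) auto
  also have "\<dots> \<le> enc m1 t2 x' y'" unfolding enc_def by simp
  finally show ?thesis .
qed

lemma enc_same: "x < m1 \<Longrightarrow> x' < m1 \<Longrightarrow>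
   enc m1 t2 x y < enc m1 t2 x' y \<longleftrightarrow> (if t2 y then x < x' else x' < x)"
  unfolding enc_def by auto

lemma enc_inj: "x < m1 \<Longrightarrow> x' < m1 \<Longrightarrow> enc m1 t2 x y = enc m1 t2 x' y' \<Longrightarrow> x = x' \<and> y = y'"
proof -
  assume x: "x < m1" and x': "x' < m1" and e: "enc m1 t2 x y = enc m1 t2 x' y'"
  have yy: "y = y'" using enc_div[OF x, of t2 y] enc_div[OF x', of t2 y'] e by simp
  have "(if t2 y then x else m1 - 1 - x) = (if t2 y then x' else m1 - 1 - x')"
    using enc_mod[OF x, of t2 y] enc_mod[OF x', of t2 y'] e yy by simp
  then have "x = x'" using x x' by (auto split: if_splits)
  then show ?thesis using yy by simp
qed

lemma decenc:
  assumes "0 < m1" "c < m1 * m2"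
  shows "dx m1 t2 c < m1" "c div m1 < m2" "enc m1 t2 (dx m1 t2 c) (c div m1) = c"
proof -
  show "dx m1 t2 c < m1" using assms unfolding dx_def by auto
  show "c div m1 < m2" using assms by (simp add: less_mult_imp_div_less mult.commute)
  have "c mod m1 < m1" using assms by simp
  then show "enc m1 t2 (dx m1 t2 c) (c div m1) = c"
    unfolding enc_def dx_def by (auto simp: mult.commute) 
qed



lemma forward:
  assumes \<alpha>: "\<alpha> permutes {1..n}" and \<beta>: "\<beta> permutes {1..n}" and m1: "0 < m1"
    and u: "u \<in> {1..n} \<rightarrow>\<^sub>E {..<m1}" and su: "sorts n t1 u \<alpha>"
    and v: "v \<in> {1..n} \<rightarrow>\<^sub>E {..<m2}" and sv: "sorts n t2 v \<beta>"
    and T: "\<And>x y. x < m1 \<Longrightarrow> y < m2 \<Longrightarrow> typ (enc m1 t2 x y) = (t1 x \<longleftrightarrow> t2 y)"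
  shows "sorts n typ (restrict (\<lambda>i. enc m1 t2 (u i) (v (inv \<alpha> i))) {1..n}) (\<alpha> \<circ> \<beta>)"
  unfolding sorts_def
proof
  fix s assume s: "s \<in> {1..<n}"
  define w where "w = restrict (\<lambda>i. enc m1 t2 (u i) (v (inv \<alpha> i))) {1..n}"
  define p where "p = \<beta> s"
  define q where "q = \<beta> (Suc s)"
  have pq: "p \<in> {1..n}" "q \<in> {1..n}" using s permutes_in_image[OF \<beta>] by (auto simp: p_def q_def)
  define i where "i = \<alpha> p"
  define j where "j = \<alpha> q"
  have ij: "i \<in> {1..n}" "j \<in> {1..n}" using pq permutes_in_image[OF \<alpha>] by (auto simp: i_def j_def)
  have ip: "inv \<alpha> i = p" "inv \<alpha> j = q" using permutes_inverses[OF \<alpha>] by (auto simp: i_def j_def)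
  have wi: "w i = enc m1 t2 (u i) (v p)" "w j = enc m1 t2 (u j) (v q)"
    using ij ip by (auto simp: w_def)
  have ub: "u i < m1" "u j < m1" using u ij by auto
  have vb: "v p < m2" "v q < m2" using v pq by auto
  have ach: "\<And>a b. 1 \<le> a \<Longrightarrow> a < b \<Longrightarrow> b \<le> n \<Longrightarrow> prec t1 u (\<alpha> a) (\<alpha> b)"
    using mono_chain[where n=n and r="prec t1 u" and f=\<alpha>] su prec_trans unfolding sorts_def by blast
  have pv: "prec t2 v p q" using sv s by (auto simp: sorts_def p_def q_def)
  have "prec typ w i j"
  proof (cases "v p < v q")
    case True
    then show ?thesis using enc_less_y[OF ub, of "v p" "v q" t2] wi by (simp add: prec_def)
  next
    case False
    then have eq: "v p = v q" and o: "if t2 (v p) then p < q else q < p" using pv by (auto simp: prec_def)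
    show ?thesis
    proof (cases "t2 (v p)")
      case True
      then have "p < q" using o by simp
      then have pr: "prec t1 u i j" using ach pq by (auto simp: i_def j_def)
      show ?thesis
      proof (cases "u i < u j")
        case True
        then show ?thesis using enc_same[OF ub, of t2 "v p"] \<open>t2 (v p)\<close> wi eq by (simp add: prec_def)
      next
        case False
        then have "u i = u j" and o2: "if t1 (u i) then i < j else j < i" using pr by (auto simp: prec_def)
        moreover have "typ (w i) = t1 (u i)" using T[OF ub(1) vb(1)] wi \<open>t2 (v p)\<close> by simp
        ultimately show ?thesis using wi eq by (simp add: prec_def)
      qed
    next
      case False
      then have "q < p" using o by simp
      then have pr: "prec t1 u j i" using ach pq by (auto simp: i_def j_def)
      show ?thesis
      proof (cases "u j < u i")
        case True
        then show ?thesis using enc_same[OF ub, of t2 "v p"] \<open>\<not> t2 (v p)\<close> wi eq by (simp add: prec_def)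
      next
        case False
        then have "u i = u j" and o2: "if t1 (u i) then j < i else i < j" using pr by (auto simp: prec_def)
        moreover have "typ (w i) = (\<not> t1 (u i))" using T[OF ub(1) vb(1)] wi \<open>\<not> t2 (v p)\<close> by simp
        ultimately show ?thesis using wi eq by (auto simp: prec_def split: if_splits)
      qed
    qed
  qed
  then show "prec typ (restrict (\<lambda>i. enc m1 t2 (u i) (v (inv \<alpha> i))) {1..n}) ((\<alpha> \<circ> \<beta>) s) ((\<alpha> \<circ> \<beta>) (Suc s))"
    by (simp add: w_def i_def j_def p_def q_def)
qed



lemma prod_count:
  assumes \<sigma>: "\<sigma> permutes {1..n}" and m1: "0 < m1" and m2: "0 < m2"
    and T: "\<And>x y. x < m1 \<Longrightarrow> y < m2 \<Longrightarrow> typ (enc m1 t2 x y) = (t1 x \<longleftrightarrow> t2 y)"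
  shows "(\<Sum>\<alpha>\<in>{p. p permutes {1..n}}. \<Sum>\<beta>\<in>{p. p permutes {1..n}}.
           if \<alpha> \<circ> \<beta> = \<sigma> then enriched_count n \<alpha> m1 t1 * enriched_count n \<beta> m2 t2 else 0)
         = enriched_count n \<sigma> (m1 * m2) typ"
proof -
  let ?P = "{p. p permutes {1..n}}"
  let ?S1 = "\<lambda>\<alpha>. {u \<in> {1..n} \<rightarrow>\<^sub>E {..<m1}. sorts n t1 u \<alpha>}"
  let ?S2 = "\<lambda>\<beta>. {v \<in> {1..n} \<rightarrow>\<^sub>E {..<m2}. sorts n t2 v \<beta>}"
  let ?S3 = "{w \<in> {1..n} \<rightarrow>\<^sub>E {..<m1 * m2}. sorts n typ w \<sigma>}"
  have finP: "finite ?P" by (rule finite_permutations) simp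
  have step1: "(\<Sum>\<beta>\<in>?P. if \<alpha> \<circ> \<beta> = \<sigma> then enriched_count n \<alpha> m1 t1 * enriched_count n \<beta> m2 t2 else 0)
      = card (?S1 \<alpha> \<times> ?S2 (inv \<alpha> \<circ> \<sigma>))" if a: "\<alpha> \<in> ?P" for \<alpha>
  proof -
    have ap: "\<alpha> permutes {1..n}" using a by simp
    have iff: "\<alpha> \<circ> \<beta> = \<sigma> \<longleftrightarrow> \<beta> = inv \<alpha> \<circ> \<sigma>" for \<beta>
    proof
      assume "\<alpha> \<circ> \<beta> = \<sigma>"
      then have "inv \<alpha> \<circ> (\<alpha> \<circ> \<beta>) = inv \<alpha> \<circ> \<sigma>" by simp
      then show "\<beta> = inv \<alpha> \<circ> \<sigma>" by (simp add: o_assoc permutes_inv_o[OF ap])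
    next
      assume "\<beta> = inv \<alpha> \<circ> \<sigma>"
      then show "\<alpha> \<circ> \<beta> = \<sigma>" by (simp add: o_assoc permutes_inv_o[OF ap])
    qed
    have bp: "inv \<alpha> \<circ> \<sigma> permutes {1..n}" by (rule permutes_compose[OF \<sigma> permutes_inv[OF ap]])
    have "(\<Sum>\<beta>\<in>?P. if \<alpha> \<circ> \<beta> = \<sigma> then enriched_count n \<alpha> m1 t1 * enriched_count n \<beta> m2 t2 else 0)
       = (\<Sum>\<beta>\<in>?P. if \<beta> = inv \<alpha> \<circ> \<sigma> then enriched_count n \<alpha> m1 t1 * enriched_count n \<beta> m2 t2 else 0)"
      by (simp add: iff)
    also have "\<dots> = enriched_count n \<alpha> m1 t1 * enriched_count n (inv \<alpha> \<circ> \<sigma>) m2 t2"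
      using bp finP by (simp add: sum.delta)
    also have "\<dots> = card (?S1 \<alpha> \<times> ?S2 (inv \<alpha> \<circ> \<sigma>))"
      by (simp add: EC_words[OF ap] EC_words[OF bp] card_cartesian_product)
    finally show ?thesis .
  qed
  have "(\<Sum>\<alpha>\<in>?P. \<Sum>\<beta>\<in>?P.
           if \<alpha> \<circ> \<beta> = \<sigma> then enriched_count n \<alpha> m1 t1 * enriched_count n \<beta> m2 t2 else 0)
       = (\<Sum>\<alpha>\<in>?P. card (?S1 \<alpha> \<times> ?S2 (inv \<alpha> \<circ> \<sigma>)))"
    using step1 by (rule sum.cong[OF refl])
  also have "\<dots> = card (SIGMA \<alpha>:?P. ?S1 \<alpha> \<times> ?S2 (inv \<alpha> \<circ> \<sigma>))"
    by (rule card_SigmaI[symmetric]) (use finP in \<open>auto intro!: finite_cartesian_product finite_PiE\<close>)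
  also have "\<dots> = card ?S3"
  proof (rule bij_betw_same_card)
    define F where "F = (\<lambda>(\<alpha>::nat\<Rightarrow>nat, u::nat\<Rightarrow>nat, v::nat\<Rightarrow>nat).
        restrict (\<lambda>i. enc m1 t2 (u i) (v (inv \<alpha> i))) {1..n})"
    show "bij_betw F (SIGMA \<alpha>:?P. ?S1 \<alpha> \<times> ?S2 (inv \<alpha> \<circ> \<sigma>)) ?S3"
      unfolding bij_betw_def
    proof (intro conjI)
      show "inj_on F (SIGMA \<alpha>:?P. ?S1 \<alpha> \<times> ?S2 (inv \<alpha> \<circ> \<sigma>))"
      proof (rule inj_onI)
        fix x y
        assume x: "x \<in> (SIGMA \<alpha>:?P. ?S1 \<alpha> \<times> ?S2 (inv \<alpha> \<circ> \<sigma>))"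
           and y: "y \<in> (SIGMA \<alpha>:?P. ?S1 \<alpha> \<times> ?S2 (inv \<alpha> \<circ> \<sigma>))" and exy: "F x = F y"
        obtain \<alpha> u v where xe: "x = (\<alpha>, u, v)" by (cases x) auto
        obtain \<alpha>' u' v' where ye: "y = (\<alpha>', u', v')" by (cases y) auto
        have a: "\<alpha> permutes {1..n}" and u: "u \<in> {1..n} \<rightarrow>\<^sub>E {..<m1}" "sorts n t1 u \<alpha>"
          and v: "v \<in> {1..n} \<rightarrow>\<^sub>E {..<m2}" "sorts n t2 v (inv \<alpha> \<circ> \<sigma>)"
          using x xe by auto
        have a': "\<alpha>' permutes {1..n}" and u': "u' \<in> {1..n} \<rightarrow>\<^sub>E {..<m1}" "sorts n t1 u' \<alpha>'"
          and v': "v' \<in> {1..n} \<rightarrow>\<^sub>E {..<m2}" "sorts n t2 v' (inv \<alpha>' \<circ> \<sigma>)"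
          using y ye by auto
        have e: "F (\<alpha>, u, v) = F (\<alpha>', u', v')" using exy xe ye by simp
        have pt: "u i = u' i \<and> v (inv \<alpha> i) = v' (inv \<alpha>' i)" if i: "i \<in> {1..n}" for i
        proof -
          have "enc m1 t2 (u i) (v (inv \<alpha> i)) = enc m1 t2 (u' i) (v' (inv \<alpha>' i))"
            using fun_cong[OF e, of i] i by (simp add: F_def)
          then show ?thesis using enc_inj u(1) u'(1) i by blast
        qed
        have uu: "u = u'" using u(1) u'(1) pt by (blast intro: PiE_ext)
        have aa: "\<alpha> = \<alpha>'" using sorts_unique[OF a a' u(2)] u'(2) uu by simp
        have "v j = v' j" if j: "j \<in> {1..n}" for j
        proof -
          have "\<alpha> j \<in> {1..n}" using j permutes_in_image[OF a] by simp
          then show ?thesis using pt[of "\<alpha> j"] aa permutes_inverses(2)[OF a] by simp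
        qed
        then have "v = v'" using v(1) v'(1) by (blast intro: PiE_ext)
        then show "x = y" using aa uu xe ye by simp
      qed
      show "F ` (SIGMA \<alpha>:?P. ?S1 \<alpha> \<times> ?S2 (inv \<alpha> \<circ> \<sigma>)) = ?S3"
      proof (rule equalityI)
       show "F ` (SIGMA \<alpha>:?P. ?S1 \<alpha> \<times> ?S2 (inv \<alpha> \<circ> \<sigma>)) \<subseteq> ?S3"
       proof (rule image_subsetI)
        fix x assume x: "x \<in> (SIGMA \<alpha>:?P. ?S1 \<alpha> \<times> ?S2 (inv \<alpha> \<circ> \<sigma>))"
        obtain \<alpha> u v where xe: "x = (\<alpha>, u, v)" by (cases x) auto
        have a: "\<alpha> permutes {1..n}" and u: "u \<in> {1..n} \<rightarrow>\<^sub>E {..<m1}" "sorts n t1 u \<alpha>"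
          and v: "v \<in> {1..n} \<rightarrow>\<^sub>E {..<m2}" "sorts n t2 v (inv \<alpha> \<circ> \<sigma>)"
          using x xe by auto
        have bp: "inv \<alpha> \<circ> \<sigma> permutes {1..n}" by (rule permutes_compose[OF \<sigma> permutes_inv[OF a]])
        have "\<alpha> \<circ> (inv \<alpha> \<circ> \<sigma>) = \<sigma>" by (simp add: o_assoc permutes_inv_o[OF a])
        then have s1: "sorts n typ (F (\<alpha>, u, v)) \<sigma>"
          using forward[OF a bp m1 u v T] by (simp add: F_def)
        have s2: "F (\<alpha>, u, v) \<in> {1..n} \<rightarrow>\<^sub>E {..<m1 * m2}"
        proof -
          have "enc m1 t2 (u i) (v (inv \<alpha> i)) < m1 * m2" if i: "i \<in> {1..n}" for i
          proof -
            have "inv \<alpha> i \<in> {1..n}" using i permutes_in_image[OF permutes_inv[OF a]] by simp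
            then show ?thesis using enc_lt u(1) v(1) i by blast
          qed
          then show ?thesis by (auto simp: F_def)
        qed
        show "F x \<in> ?S3" using s1 s2 xe by simp
       qed
      next
       show "?S3 \<subseteq> F ` (SIGMA \<alpha>:?P. ?S1 \<alpha> \<times> ?S2 (inv \<alpha> \<circ> \<sigma>))"
       proof
        fix w assume "w \<in> ?S3"
        then have w: "w \<in> {1..n} \<rightarrow>\<^sub>E {..<m1 * m2}" "sorts n typ w \<sigma>" by auto
        define u where "u = restrict (\<lambda>i. dx m1 t2 (w i)) {1..n}"
        have uP: "u \<in> {1..n} \<rightarrow>\<^sub>E {..<m1}" using w(1) decenc(1)[OF m1] by (auto simp: u_def)
        obtain \<alpha> where a: "\<alpha> permutes {1..n}" and su: "sorts n t1 u \<alpha>" using sorts_exists by blast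
        define v where "v = restrict (\<lambda>j. w (\<alpha> j) div m1) {1..n}"
        have vP: "v \<in> {1..n} \<rightarrow>\<^sub>E {..<m2}"
        proof -
          have "w (\<alpha> j) div m1 < m2" if j: "j \<in> {1..n}" for j
          proof -
            have "\<alpha> j \<in> {1..n}" using j permutes_in_image[OF a] by simp
            then have "w (\<alpha> j) < m1 * m2" using w(1) by auto
            then show ?thesis using decenc(2)[OF m1] by blast
          qed
          then show ?thesis by (auto simp: v_def)
        qed
        obtain \<beta> where b: "\<beta> permutes {1..n}" and sv: "sorts n t2 v \<beta>" using sorts_exists by blast
        have Fw: "F (\<alpha>, u, v) = w"
        proof (rule PiE_ext[OF _ w(1)])
          show "F (\<alpha>, u, v) \<in> {1..n} \<rightarrow>\<^sub>E {..<m1 * m2}"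
          proof -
            have "enc m1 t2 (u i) (v (inv \<alpha> i)) < m1 * m2" if i: "i \<in> {1..n}" for i
            proof -
              have "inv \<alpha> i \<in> {1..n}" using i permutes_in_image[OF permutes_inv[OF a]] by simp
              then show ?thesis using enc_lt uP vP i by blast
            qed
            then show ?thesis by (auto simp: F_def)
          qed
          fix i assume i: "i \<in> {1..n}"
          have ii: "inv \<alpha> i \<in> {1..n}" using i permutes_in_image[OF permutes_inv[OF a]] by simp
          have "w i < m1 * m2" using w(1) i by auto
          then show "F (\<alpha>, u, v) i = w i"
            using i ii decenc(3)[OF m1, of "w i" m2 t2] permutes_inverses(1)[OF a]
            by (simp add: F_def u_def v_def)
        qed
        have "sorts n typ w (\<alpha> \<circ> \<beta>)" using forward[OF a b m1 uP su vP sv T] Fw by (simp add: F_def)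
        then have "\<alpha> \<circ> \<beta> = \<sigma>" using sorts_unique[OF permutes_compose[OF b a] \<sigma>] w(2) by blast
        then have "\<beta> = inv \<alpha> \<circ> \<sigma>"
          by (metis o_assoc permutes_inv_o(2)[OF a] id_o)
        then have "(\<alpha>, u, v) \<in> (SIGMA \<alpha>:?P. ?S1 \<alpha> \<times> ?S2 (inv \<alpha> \<circ> \<sigma>))"
          using a uP su vP sv by auto
        then show "w \<in> F ` (SIGMA \<alpha>:?P. ?S1 \<alpha> \<times> ?S2 (inv \<alpha> \<circ> \<sigma>))" using Fw by force
       qed
      qed
    qed
  qed
  also have "\<dots> = enriched_count n \<sigma> (m1 * m2) typ" by (simp add: EC_words[OF \<sigma>])
  finally show ?thesis .
qed



definition nasc :: "(nat \<Rightarrow> nat) \<Rightarrow> nat \<Rightarrow> nat" where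
  "nasc \<beta> s = card {t \<in> {1..<s}. \<beta> t < \<beta> (Suc t)}"

lemma nasc_Suc: "1 \<le> s \<Longrightarrow> nasc \<beta> (Suc s) = nasc \<beta> s + (if \<beta> s < \<beta> (Suc s) then 1 else 0)"
proof -
  assume s: "1 \<le> s"
  have "{t \<in> {1..<Suc s}. \<beta> t < \<beta> (Suc t)} =
        (if \<beta> s < \<beta> (Suc s) then insert s {t \<in> {1..<s}. \<beta> t < \<beta> (Suc t)} else {t \<in> {1..<s}. \<beta> t < \<beta> (Suc t)})"
    using s by (auto simp: less_Suc_eq)
  then show ?thesis by (simp add: nasc_def)
qed

lemma nasc_mono: "s \<le> t \<Longrightarrow> nasc \<beta> s \<le> nasc \<beta> t"
  unfolding nasc_def by (rule card_mono) auto

lemma nasc_1: "nasc \<beta> 1 = 0"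
  by (simp add: nasc_def)

definition Str :: "nat \<Rightarrow> nat \<Rightarrow> (nat \<Rightarrow> nat) set" where
  "Str n N = {b \<in> {1..n} \<rightarrow>\<^sub>E {..<N}. \<forall>s\<in>{1..<n}. b s < b (Suc s)}"

lemma b_ge:
  assumes b: "b \<in> Str n N"
  shows "s \<in> {1..n} \<Longrightarrow> nasc \<beta> s \<le> b s"
proof (induction s)
  case 0 then show ?case by simp
next
  case (Suc s)
  show ?case
  proof (cases "s = 0")
    case True then show ?thesis by (simp add: nasc_def)
  next
    case False
    then have "nasc \<beta> s \<le> b s" using Suc by auto
    moreover have "b s < b (Suc s)" using b Suc.prems False by (auto simp: Str_def)
    moreover have "nasc \<beta> (Suc s) \<le> nasc \<beta> s + 1" using nasc_Suc[of s \<beta>] False by auto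
    ultimately show ?thesis by linarith
  qed
qed

lemma EC_true:
  assumes p: "\<beta> permutes {1..n}"
  shows "enriched_count n \<beta> k (\<lambda>_. True) = card (Str n (k + nasc \<beta> n))"
proof -
  have neq: "\<And>s. \<beta> s \<noteq> \<beta> (Suc s)" using permutes_inj[OF p] by (metis injD n_not_Suc_n)
  let ?B = "{a \<in> {1..n} \<rightarrow>\<^sub>E {..<k}.
      (\<forall>s\<in>{1..<n}. a s \<le> a (Suc s)) \<and>
      (\<forall>s\<in>{1..<n}. \<beta> s < \<beta> (Suc s) \<longrightarrow> (a s < a (Suc s) \<or> (a s = a (Suc s) \<and> True))) \<and>
      (\<forall>s\<in>{1..<n}. \<beta> s > \<beta> (Suc s) \<longrightarrow> (a s < a (Suc s) \<or> (a s = a (Suc s) \<and> \<not> True)))}"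
  let ?N = "k + nasc \<beta> n"
  have "bij_betw (\<lambda>a. restrict (\<lambda>s. a s + nasc \<beta> s) {1..n}) ?B (Str n ?N)"
  proof (rule bij_betwI[where g = "\<lambda>b. restrict (\<lambda>s. b s - nasc \<beta> s) {1..n}"])
    show "(\<lambda>a. restrict (\<lambda>s. a s + nasc \<beta> s) {1..n}) \<in> ?B \<rightarrow> Str n ?N"
    proof
      fix a assume a: "a \<in> ?B"
      have bnd: "a s + nasc \<beta> s < ?N" if s: "s \<in> {1..n}" for s
      proof -
        have "a s < k" using a s by (auto simp: PiE_iff)
        then show ?thesis using nasc_mono[of s n \<beta>] s by auto
      qed
      have st: "a s + nasc \<beta> s < a (Suc s) + nasc \<beta> (Suc s)" if s: "s \<in> {1..<n}" for s
      proof (cases "\<beta> s < \<beta> (Suc s)")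
        case True
        then show ?thesis using a s nasc_Suc[of s \<beta>] by auto
      next
        case False
        then have "\<beta> s > \<beta> (Suc s)" using neq[of s] by auto
        then show ?thesis using a s nasc_Suc[of s \<beta>] False by auto
      qed
      show "restrict (\<lambda>s. a s + nasc \<beta> s) {1..n} \<in> Str n ?N"
        using bnd st by (auto simp: Str_def)
    qed
    show "(\<lambda>b. restrict (\<lambda>s. b s - nasc \<beta> s) {1..n}) \<in> Str n ?N \<rightarrow> ?B"
    proof
      fix b assume b: "b \<in> Str n ?N"
      have ge: "\<And>s. s \<in> {1..n} \<Longrightarrow> nasc \<beta> s \<le> b s" using b_ge[OF b] by blast
      have bs: "\<And>s. s \<in> {1..<n} \<Longrightarrow> b s < b (Suc s)" using b by (auto simp: Str_def)
      have bn: "\<And>s. s \<in> {1..n} \<Longrightarrow> b s < ?N" using b by (auto simp: Str_def PiE_iff)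
      have mono1: "b s - nasc \<beta> s \<le> b (Suc s) - nasc \<beta> (Suc s)" and
           strict1: "\<beta> s > \<beta> (Suc s) \<Longrightarrow> b s - nasc \<beta> s < b (Suc s) - nasc \<beta> (Suc s)"
        if s: "s \<in> {1..<n}" for s
      proof -
        have g1: "nasc \<beta> s \<le> b s" "nasc \<beta> (Suc s) \<le> b (Suc s)" using ge s by auto
        have "b s < b (Suc s)" using bs s by auto
        then show "b s - nasc \<beta> s \<le> b (Suc s) - nasc \<beta> (Suc s)"
          using g1 nasc_Suc[of s \<beta>] s by (auto split: if_splits)
        show "b s - nasc \<beta> s < b (Suc s) - nasc \<beta> (Suc s)" if "\<beta> s > \<beta> (Suc s)"
          using g1 nasc_Suc[of s \<beta>] s that \<open>b s < b (Suc s)\<close> by auto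
      qed
      have chain: "\<forall>s\<in>{1..<n}. b s - nasc \<beta> s \<le> b (Suc s) - nasc \<beta> (Suc s)" using mono1 by blast
      have lek: "b s - nasc \<beta> s < k" if s: "s \<in> {1..n}" for s
      proof -
        have "b n - nasc \<beta> n < k" using bn[of n] ge[of n] s by auto
        moreover have "b s - nasc \<beta> s \<le> b n - nasc \<beta> n"
        proof (cases "s = n")
          case False
          then show ?thesis
            using mono_chain[where n=n and r="(\<le>)" and f="\<lambda>s. b s - nasc \<beta> s", OF chain, where s=s and t=n] s
            by auto
        qed simp
        ultimately show ?thesis by linarith
      qed
      show "restrict (\<lambda>s. b s - nasc \<beta> s) {1..n} \<in> ?B"
        using lek mono1 strict1 by (auto simp: PiE_iff intro: le_neq_implies_less)
    qed
    show "restrict (\<lambda>s. restrict (\<lambda>s. a s + nasc \<beta> s) {1..n} s - nasc \<beta> s) {1..n} = a" if "a \<in> ?B" for a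
      using that by (auto simp: PiE_iff extensional_def)
    show "restrict (\<lambda>s. restrict (\<lambda>s. b s - nasc \<beta> s) {1..n} s + nasc \<beta> s) {1..n} = b" if b: "b \<in> Str n ?N" for b
    proof (rule PiE_ext[of _ "{1..n}" "\<lambda>_. {..<?N}"])
      show "b \<in> {1..n} \<rightarrow>\<^sub>E {..<?N}" using b by (auto simp: Str_def)
      show "restrict (\<lambda>s. restrict (\<lambda>s. b s - nasc \<beta> s) {1..n} s + nasc \<beta> s) {1..n} \<in> {1..n} \<rightarrow>\<^sub>E {..<?N}"
        using b_ge[OF b] b by (auto simp: Str_def PiE_iff)
    qed (use b_ge[OF b] in auto)
  qed
  then have "card ?B = card (Str n ?N)" by (rule bij_betw_same_card)
  then show ?thesis unfolding enriched_count_def by simp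
qed

lemma card_Str: "card (Str n N) = N choose n"
proof -
  let ?T = "{B. B \<subseteq> {..<N} \<and> card B = n}"
  have "bij_betw (\<lambda>b. b ` {1..n}) (Str n N) ?T"
    unfolding bij_betw_def
  proof (intro conjI)
    show "inj_on (\<lambda>b. b ` {1..n}) (Str n N)"
    proof (rule inj_onI)
      fix b b' assume b: "b \<in> Str n N" and b': "b' \<in> Str n N" and e: "b ` {1..n} = b' ` {1..n}"
      have "b s = b' s" if s: "s \<in> {1..n}" for s
        by (rule chain_unique[where n=n and r="(<)"]) (use b b' e s in \<open>auto simp: Str_def\<close>)
      then show "b = b'" using b b' by (auto intro: PiE_ext simp: Str_def)
    qed
    show "(\<lambda>b. b ` {1..n}) ` Str n N = ?T"
    proof (rule equalityI)
      show "(\<lambda>b. b ` {1..n}) ` Str n N \<subseteq> ?T"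
      proof (rule image_subsetI)
        fix b assume b: "b \<in> Str n N"
        have ch: "\<forall>s\<in>{1..<n}. b s < b (Suc s)" using b by (simp add: Str_def)
        have "inj_on b {1..n}"
          by (rule chain_inj[where n=n and r="(<)" and f=b]) (fact ch, erule (1) less_trans, simp)
        then have "card (b ` {1..n}) = n" by (simp add: card_image)
        moreover have "b ` {1..n} \<subseteq> {..<N}" using b by (auto simp: Str_def)
        ultimately show "b ` {1..n} \<in> ?T" by simp
      qed
      show "?T \<subseteq> (\<lambda>b. b ` {1..n}) ` Str n N"
      proof
        fix B assume B: "B \<in> ?T"
        have fin: "finite B" using B finite_subset by auto
        define xs where "xs = sorted_list_of_set B"
        have xs: "sorted_wrt (<) xs" "set xs = B" "length xs = card B"
          using fin by (auto simp: xs_def strict_sorted_iff)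
        have len: "length xs = n" using xs B by simp
        define b where "b = restrict (\<lambda>s. xs ! (s - 1)) {1..n}"
        have img: "b ` {1..n} = B"
        proof
          show "b ` {1..n} \<subseteq> B" using len xs(2) by (auto simp: b_def)
          show "B \<subseteq> b ` {1..n}"
          proof
            fix x assume "x \<in> B"
            then obtain i where i: "i < length xs" "xs ! i = x" using xs(2) by (auto simp: in_set_conv_nth)
            then have "b (Suc i) = x" "Suc i \<in> {1..n}" using len by (auto simp: b_def)
            then show "x \<in> b ` {1..n}" by (metis imageI)
          qed
        qed
        have "b \<in> Str n N"
        proof -
          have "b \<in> {1..n} \<rightarrow>\<^sub>E {..<N}" using img B by (auto simp: b_def)
          moreover have "b s < b (Suc s)" if s: "s \<in> {1..<n}" for s
            using sorted_wrt_nth_less[OF xs(1), of "s - 1" s] s len by (auto simp: b_def)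
          ultimately show ?thesis by (simp add: Str_def)
        qed
        then show "B \<in> (\<lambda>b. b ` {1..n}) ` Str n N" using img by blast
      qed
    qed
  qed
  then have "card (Str n N) = card ?T" by (rule bij_betw_same_card)
  also have "\<dots> = N choose n" using n_subsets[of "{..<N}" n] by simp
  finally show ?thesis .
qed

definition bpoly :: "nat \<Rightarrow> nat \<Rightarrow> rat poly" where
  "bpoly c n = smult (1 / fact n) (\<Prod>i\<in>{0..<n}. [:of_nat c - of_nat i, 1:])"

lemma bpoly: "poly (bpoly c n) (of_nat k) = of_nat ((k + c) choose n)"
proof -
  have "of_nat ((k + c) choose n) = (of_nat (k + c) gchoose n :: rat)" by (rule binomial_gbinomial)
  also have "\<dots> = (\<Prod>i=0..<n. of_nat (k + c) - of_nat i) / fact n" by (simp add: gbinomial_prod_rev)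
  also have "\<dots> = poly (bpoly c n) (of_nat k)"
    by (simp add: bpoly_def poly_prod algebra_simps)
  finally show ?thesis by simp
qed



lemma poly_nat_unique:
  fixes p q :: "rat poly"
  assumes "\<forall>k\<ge>1. poly p (of_nat k) = poly q (of_nat k)"
  shows "p = q"
proof (rule ccontr)
  assume "p \<noteq> q"
  then have "p - q \<noteq> 0" by simp
  then have fin: "finite {x. poly (p - q) x = 0}" by (rule poly_roots_finite)
  have "range (\<lambda>k::nat. of_nat (Suc k) :: rat) \<subseteq> {x. poly (p - q) x = 0}"
    using assms by auto
  then have "finite (range (\<lambda>k::nat. of_nat (Suc k) :: rat))" using fin finite_subset by blast
  moreover have "inj (\<lambda>k::nat. of_nat (Suc k) :: rat)" by (rule injI) simp
  ultimately have "finite (UNIV :: nat set)" using finite_imageD by blast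
  then show False by simp
qed

lemma THE_poly:
  fixes f :: "nat \<Rightarrow> rat"
  assumes "\<exists>p. \<forall>k\<ge>1. poly p (of_nat k) = f k"
  shows "\<forall>k\<ge>1. poly (THE p. \<forall>k\<ge>1. poly p (of_nat k) = f k) (of_nat k) = f k"
proof -
  have "\<exists>!p. \<forall>k\<ge>1. poly p (of_nat k) = f k"
  proof -
    obtain p where p: "\<forall>k\<ge>1. poly p (of_nat k) = f k" using assms by blast
    moreover have "q = p" if "\<forall>k\<ge>1. poly q (of_nat k) = f k" for q
      using poly_nat_unique[of q p] that p by simp
    ultimately show ?thesis by blast
  qed
  then show ?thesis by (rule theI')
qed

lemma EC_poly_exists:
  assumes \<sigma>: "\<sigma> permutes {1..n}" and t: "t = odd \<or> t = even"
  shows "\<exists>p. \<forall>k\<ge>1. poly p (of_nat k) = (of_nat (enriched_count n \<sigma> (2 * k) t) :: rat)"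
proof -
  let ?P = "{p. p permutes {1..n}}"
  have finP: "finite ?P" by (rule finite_permutations) simp
  define p where "p = (\<Sum>\<alpha>\<in>?P. \<Sum>\<beta>\<in>?P. if \<alpha> \<circ> \<beta> = \<sigma> then
        smult (of_nat (enriched_count n \<alpha> 2 t)) (bpoly (nasc \<beta> n) n) else 0)"
  show ?thesis
  proof (intro exI allI impI)
    fix k :: nat assume k: "k \<ge> 1"
    have T: "\<And>x y. x < 2 \<Longrightarrow> y < k \<Longrightarrow> t (enc 2 (\<lambda>_. True) x y) = (t x \<longleftrightarrow> True)"
      using t by (auto simp: enc_def)
    have eq: "enriched_count n \<sigma> (2 * k) t = (\<Sum>\<alpha>\<in>?P. \<Sum>\<beta>\<in>?P.
           if \<alpha> \<circ> \<beta> = \<sigma> then enriched_count n \<alpha> 2 t * enriched_count n \<beta> k (\<lambda>_. True) else 0)"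
      using prod_count[OF \<sigma>, of 2 k t "\<lambda>_. True" t] k T by simp
    have "poly p (of_nat k) = (\<Sum>\<alpha>\<in>?P. \<Sum>\<beta>\<in>?P. if \<alpha> \<circ> \<beta> = \<sigma> then
        of_nat (enriched_count n \<alpha> 2 t) * poly (bpoly (nasc \<beta> n) n) (of_nat k) else 0)"
      unfolding p_def poly_sum by (intro sum.cong refl) auto
    also have "\<dots> = (\<Sum>\<alpha>\<in>?P. \<Sum>\<beta>\<in>?P. of_nat (
           if \<alpha> \<circ> \<beta> = \<sigma> then enriched_count n \<alpha> 2 t * enriched_count n \<beta> k (\<lambda>_. True) else 0))"
      by (intro sum.cong refl) (auto simp: bpoly EC_true card_Str)
    also have "\<dots> = of_nat (enriched_count n \<sigma> (2 * k) t)"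
      unfolding eq of_nat_sum by simp
    finally show "poly p (of_nat k) = of_nat (enriched_count n \<sigma> (2 * k) t)" .
  qed
qed

definition ecp :: "nat \<Rightarrow> (nat \<Rightarrow> bool) \<Rightarrow> (nat \<Rightarrow> nat) \<Rightarrow> rat poly" where
  "ecp n t \<pi> = (THE p. \<forall>k\<ge>1. poly p (of_nat k) = of_nat (enriched_count n \<pi> (2 * k) t))"

lemma ecp_prop:
  assumes "\<pi> permutes {1..n}" "t = odd \<or> t = even" "k \<ge> 1"
  shows "poly (ecp n t \<pi>) (of_nat k) = of_nat (enriched_count n \<pi> (2 * k) t)"
  using THE_poly[OF EC_poly_exists[OF assms(1,2)]] assms(3) unfolding ecp_def by blast

lemma eop_eq: "enriched_order_poly n \<pi> = ecp n odd \<pi>"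
  unfolding enriched_order_poly_def enriched_order_def ecp_def by (rule refl)

lemma eeop_eq: "ext_enriched_order_poly n \<pi> = ecp n even \<pi>"
  unfolding ext_enriched_order_poly_def ext_enriched_order_def ecp_def by (rule refl)

lemma rho_eq: "rho n x = (\<lambda>\<pi>. if \<pi> permutes {1..n} then poly (ecp n odd \<pi>) (x / 2) else 0)"
  unfolding rho_def eop_eq by (rule refl)

lemma rho_bar_eq: "rho_bar n x = (\<lambda>\<pi>. if \<pi> permutes {1..n} then poly (ecp n even \<pi>) (x / 2) else 0)"
  unfolding rho_bar_def eeop_eq by (rule refl)

definition rpoly :: "(rat \<Rightarrow> rat) \<Rightarrow> bool" where
  "rpoly f \<longleftrightarrow> (\<exists>p. \<forall>x. f x = poly p x)"

lemma rpoly_const: "rpoly (\<lambda>x. c)"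
  unfolding rpoly_def by (rule exI[of _ "[:c:]"]) simp

lemma rpoly_add: "rpoly f \<Longrightarrow> rpoly g \<Longrightarrow> rpoly (\<lambda>x. f x + g x)"
  unfolding rpoly_def by (metis poly_add)

lemma rpoly_diff: "rpoly f \<Longrightarrow> rpoly g \<Longrightarrow> rpoly (\<lambda>x. f x - g x)"
  unfolding rpoly_def by (metis poly_diff)

lemma rpoly_mult: "rpoly f \<Longrightarrow> rpoly g \<Longrightarrow> rpoly (\<lambda>x. f x * g x)"
  unfolding rpoly_def by (metis poly_mult)

lemma rpoly_if: "rpoly f \<Longrightarrow> rpoly (\<lambda>x. if b then f x else 0)"
  by (cases b) (simp_all add: rpoly_const)

lemma rpoly_sum: "finite A \<Longrightarrow> (\<And>a. a \<in> A \<Longrightarrow> rpoly (f a)) \<Longrightarrow> rpoly (\<lambda>x. \<Sum>a\<in>A. f a x)"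
proof (induction A rule: finite_induct)
  case empty then show ?case by (simp add: rpoly_const)
next
  case (insert a A)
  then show ?case using rpoly_add[of "f a" "\<lambda>x. \<Sum>a\<in>A. f a x"] by simp
qed

lemma rpoly_lin: "(\<And>x. h x = c * x) \<Longrightarrow> rpoly (\<lambda>x. poly p (h x))"
  unfolding rpoly_def by (rule exI[of _ "pcompose p [:0, c:]"]) (simp add: poly_pcompose mult.commute)

lemma rpoly_zero:
  assumes "rpoly f" "\<forall>k::nat. k \<ge> 1 \<longrightarrow> f (2 * of_nat k) = 0"
  shows "f x = 0"
proof -
  obtain p where p: "\<And>x. f x = poly p x" using assms(1) unfolding rpoly_def by blast
  have "p = 0"
  proof (rule ccontr)
    assume "p \<noteq> 0"
    then have fin: "finite {x. poly p x = 0}" by (rule poly_roots_finite)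
    have "range (\<lambda>k::nat. 2 * of_nat (Suc k) :: rat) \<subseteq> {x. poly p x = 0}"
      using assms(2) p by (auto simp del: of_nat_Suc)
    then have "finite (range (\<lambda>k::nat. 2 * of_nat (Suc k) :: rat))" using fin finite_subset by blast
    moreover have "inj (\<lambda>k::nat. 2 * of_nat (Suc k) :: rat)" by (rule injI) simp
    ultimately have "finite (UNIV :: nat set)" using finite_imageD by blast
    then show False by simp
  qed
  then show ?thesis using p by simp
qed



lemma rpoly_half: "rpoly (\<lambda>x. poly p (x / 2))"
  by (rule rpoly_lin[of _ "1/2"]) simp

lemma rpoly_mc: "rpoly (\<lambda>x. poly p (x * c / 2))"
  by (rule rpoly_lin[of _ "c/2"]) simp

lemma rpoly_cm: "rpoly (\<lambda>x. poly p (c * x / 2))"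
  by (rule rpoly_lin[of _ "c/2"]) simp

lemma main_generic:
  assumes t1: "t1 = odd \<or> t1 = even" and t2: "t2 = odd \<or> t2 = even"
    and H: "\<And>k l x y. x < 2*k \<Longrightarrow> y < 2*l \<Longrightarrow> t1 (enc (2*k) t2 x y) = (t1 x \<longleftrightarrow> t2 y)"
  shows "ga_mult n (\<lambda>\<pi>. if \<pi> permutes {1..n} then poly (ecp n t1 \<pi>) (x / 2) else 0)
                   (\<lambda>\<pi>. if \<pi> permutes {1..n} then poly (ecp n t2 \<pi>) (y / 2) else 0)
       = (\<lambda>\<pi>. if \<pi> permutes {1..n} then poly (ecp n t1 \<pi>) (x * y / 2) else 0)"
proof
  fix \<sigma>
  let ?P = "{p. p permutes {1..n}}"
  have finP: "finite ?P" by (rule finite_permutations) simp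
  define G where "G = (\<lambda>x y. \<Sum>\<alpha>\<in>?P. \<Sum>\<beta>\<in>?P. if \<alpha> \<circ> \<beta> = \<sigma> then
       poly (ecp n t1 \<alpha>) (x / 2) * poly (ecp n t2 \<beta>) (y / 2) else 0)"
  have L: "ga_mult n (\<lambda>\<pi>. if \<pi> permutes {1..n} then poly (ecp n t1 \<pi>) (x / 2) else 0)
                   (\<lambda>\<pi>. if \<pi> permutes {1..n} then poly (ecp n t2 \<pi>) (y / 2) else 0) \<sigma> = G x y"
    unfolding ga_mult_def G_def by (intro sum.cong refl) auto
  show "ga_mult n (\<lambda>\<pi>. if \<pi> permutes {1..n} then poly (ecp n t1 \<pi>) (x / 2) else 0)
                   (\<lambda>\<pi>. if \<pi> permutes {1..n} then poly (ecp n t2 \<pi>) (y / 2) else 0) \<sigma>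
        = (if \<sigma> permutes {1..n} then poly (ecp n t1 \<sigma>) (x * y / 2) else 0)"
  proof (cases "\<sigma> permutes {1..n}")
    case False
    have "G x y = 0" unfolding G_def
      by (intro sum.neutral ballI) (use False permutes_compose in auto)
    then show ?thesis using L False by simp
  next
    case True
    have int: "G (2 * of_nat k) (2 * of_nat l) = poly (ecp n t1 \<sigma>) (2 * of_nat k * (2 * of_nat l) / 2)"
      if k: "k \<ge> 1" and l: "l \<ge> 1" for k l :: nat
    proof -
      have "G (2 * of_nat k) (2 * of_nat l) = (\<Sum>\<alpha>\<in>?P. \<Sum>\<beta>\<in>?P. of_nat (if \<alpha> \<circ> \<beta> = \<sigma> then
          enriched_count n \<alpha> (2 * k) t1 * enriched_count n \<beta> (2 * l) t2 else 0))"
        unfolding G_def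
      proof (intro sum.cong refl)
        fix \<alpha> \<beta> assume a: "\<alpha> \<in> ?P" and b: "\<beta> \<in> ?P"
        have e1: "poly (ecp n t1 \<alpha>) (of_nat k) = of_nat (enriched_count n \<alpha> (2 * k) t1)"
          using ecp_prop[of \<alpha> n t1 k] a t1 k by blast
        have e2: "poly (ecp n t2 \<beta>) (of_nat l) = of_nat (enriched_count n \<beta> (2 * l) t2)"
          using ecp_prop[of \<beta> n t2 l] b t2 l by blast
        show "(if \<alpha> \<circ> \<beta> = \<sigma> then poly (ecp n t1 \<alpha>) (2 * of_nat k / 2) * poly (ecp n t2 \<beta>) (2 * of_nat l / 2) else 0)
          = of_nat (if \<alpha> \<circ> \<beta> = \<sigma> then enriched_count n \<alpha> (2 * k) t1 * enriched_count n \<beta> (2 * l) t2 else 0)"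
          using e1 e2 by simp
      qed
      also have "\<dots> = of_nat (\<Sum>\<alpha>\<in>?P. \<Sum>\<beta>\<in>?P. (if \<alpha> \<circ> \<beta> = \<sigma> then
          enriched_count n \<alpha> (2 * k) t1 * enriched_count n \<beta> (2 * l) t2 else 0))"
        by (simp only: of_nat_sum)
      also have "(\<Sum>\<alpha>\<in>?P. \<Sum>\<beta>\<in>?P. (if \<alpha> \<circ> \<beta> = \<sigma> then
          enriched_count n \<alpha> (2 * k) t1 * enriched_count n \<beta> (2 * l) t2 else 0))
          = enriched_count n \<sigma> (2 * k * (2 * l)) t1"
        by (rule prod_count[OF True]) (use k l H in auto)
      also have "2 * k * (2 * l) = 2 * (2 * k * l)" by simp
      also have "(of_nat (enriched_count n \<sigma> (2 * (2 * k * l)) t1) :: rat) = poly (ecp n t1 \<sigma>) (of_nat (2 * k * l))"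
        using ecp_prop[OF True t1, of "2 * k * l"] k l by simp
      also have "(of_nat (2 * k * l) :: rat) = 2 * of_nat k * (2 * of_nat l) / 2" by simp
      finally show ?thesis .
    qed
    have step1: "G x (2 * of_nat l) = poly (ecp n t1 \<sigma>) (x * (2 * of_nat l) / 2)" if l: "l \<ge> 1" for x l
    proof -
      have "rpoly (\<lambda>x. G x (2 * of_nat l) - poly (ecp n t1 \<sigma>) (x * (2 * of_nat l) / 2))"
        unfolding G_def
        by (intro rpoly_diff rpoly_sum finP rpoly_if rpoly_mult rpoly_const rpoly_half rpoly_mc)
      moreover have "\<forall>k::nat. k \<ge> 1 \<longrightarrow> G (2 * of_nat k) (2 * of_nat l) - poly (ecp n t1 \<sigma>) (2 * of_nat k * (2 * of_nat l) / 2) = 0"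
        using int l by simp
      ultimately show ?thesis using rpoly_zero[of "\<lambda>x. G x (2 * of_nat l) - poly (ecp n t1 \<sigma>) (x * (2 * of_nat l) / 2)" x]
        by simp
    qed
    have "rpoly (\<lambda>y. G x y - poly (ecp n t1 \<sigma>) (x * y / 2))"
      unfolding G_def
      by (intro rpoly_diff rpoly_sum finP rpoly_if rpoly_mult rpoly_const rpoly_half rpoly_cm)
    moreover have "\<forall>l::nat. l \<ge> 1 \<longrightarrow> G x (2 * of_nat l) - poly (ecp n t1 \<sigma>) (x * (2 * of_nat l) / 2) = 0"
      using step1 by simp
    ultimately have "G x y - poly (ecp n t1 \<sigma>) (x * y / 2) = 0"
      using rpoly_zero[of "\<lambda>y. G x y - poly (ecp n t1 \<sigma>) (x * y / 2)" y] by simp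
    then show ?thesis using L True by simp
  qed
qed

lemma par:
  assumes "x < 2 * (k::nat)"
  shows "even (y * (2 * k) + (if b then x else 2 * k - 1 - x)) \<longleftrightarrow> (if b then even x else odd x)"
proof -
  have "even (y * (2 * k))" by simp
  moreover have "even (2 * k - 1 - x) \<longleftrightarrow> odd x" using assms by presburger
  ultimately show ?thesis by auto
qed

theorem theorem3p1:
  fixes n :: nat
  assumes "n \<ge> 1"
  shows "\<forall>x y :: rat.
           ga_mult n (rho n x) (rho n y) = rho n (x * y) \<and>
           ga_mult n (rho_bar n x) (rho_bar n y) = rho_bar n (x * y) \<and>
           ga_mult n (rho_bar n x) (rho n y) = rho_bar n (x * y) \<and>
           ga_mult n (rho n x) (rho_bar n y) = rho n (x * y)"
proof (intro allI conjI)
  fix x y :: rat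
  show "ga_mult n (rho n x) (rho n y) = rho n (x * y)"
    unfolding rho_eq by (rule main_generic) (auto simp: enc_def par)
  show "ga_mult n (rho_bar n x) (rho_bar n y) = rho_bar n (x * y)"
    unfolding rho_bar_eq by (rule main_generic) (auto simp: enc_def par)
  show "ga_mult n (rho_bar n x) (rho n y) = rho_bar n (x * y)"
    unfolding rho_eq rho_bar_eq by (rule main_generic) (auto simp: enc_def par)
  show "ga_mult n (rho n x) (rho_bar n y) = rho n (x * y)"
    unfolding rho_eq rho_bar_eq by (rule main_generic) (auto simp: enc_def par)
qed


end
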